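(* Let $P(\lambda)=\sum_{j=0}^m A_j\lambda^j$ be an $n\times n$ complex matrix polynomial, $\mu_1\neq\mu_2$ complex numbers, $\varepsilon>0$ and $w=\{\omega_0,\dots,\omega_m\}$ nonnegative weights with $\omega_0>0$. Suppose $Q(\lambda)=P(\lambda)+\Delta(\lambda)\in\mathcal{B}(P,\varepsilon,w)$, where $\Delta(\lambda)=\sum_{j=0}^m\Delta_j\lambda^j$, and that $\mu_1,\mu_2$ are eigenvalues of $Q$. Then for every $\gamma\neq0$, $$\varepsilon\ \ge\ \frac{\|F[\Delta(\mu_1,\mu_2);\gamma]\|}{\left\|\begin{bmatrix} w(|\mu_1|) & 0\\ \gamma\,|w[\mu_1,\mu_2]| & w(|\mu_2|)\end{bmatrix}\right\|}\ \ge\ \frac{s_{2n-1}(F[P(\mu_1,\mu_2);\gamma])}{\left\|\begin{bmatrix} w(|\mu_1|) & 0\\ \gamma\,|w[\mu_1,\mu_2]| & w(|\mu_2|)\end{bmatrix}\right\|}.$$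
   Context: $\mathcal{B}(P,\varepsilon,w)$ is the set of matrix polynomials $\sum_{j=0}^m(A_j+\Delta_j)\lambda^j$ with $\Delta_j\in\mathbb{C}^{n\times n}$ and $\|\Delta_j\|\le\varepsilon\omega_j$ for $j=0,\dots,m$ ($\|\cdot\|$ the spectral norm). $w(\lambda)=\sum_{j=0}^m\omega_j\lambda^j$, and $|w[\mu_1,\mu_2]|$ denotes $\sum_{j=0}^m\omega_j\frac{|\mu_1^j-\mu_2^j|}{|\mu_1-\mu_2|}$. For a matrix polynomial $R$, $R[\mu_1,\mu_2]=\frac{R(\mu_1)-R(\mu_2)}{\mu_1-\mu_2}$ and $F[R(\mu_1,\mu_2);\gamma]=\begin{bmatrix} R(\mu_1) & 0\\ \gamma R[\mu_1,\mu_2] & R(\mu_2)\end{bmatrix}$. Singular values are ordered $s_1\ge\dots\ge s_{2n}$, so $s_{2n-1}$ is the second smallest. *)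

theory Defs
  imports "HOL-Analysis.Analysis" "HOL-Computational_Algebra.Polynomial"
begin

text \<open>Square complex matrices of a fixed size are represented by
  complex^'k^'k (the size is the cardinality of the finite index type 'k).\<close>

definition specnorm :: "complex^'k^'k \<Rightarrow> real" where
  "specnorm M = onorm (\<lambda>x. M *v x)"

definition mpeval :: "(nat \<Rightarrow> complex^'n^'n) \<Rightarrow> nat \<Rightarrow> complex \<Rightarrow> complex^'n^'n" where
  "mpeval A m z = (\<chi> i k. \<Sum>j\<le>m. z ^ j * (A j $ i $ k))"

definition mpdiv :: "(nat \<Rightarrow> complex^'n^'n) \<Rightarrow> nat \<Rightarrow> complex \<Rightarrow> complex \<Rightarrow> complex^'n^'n" where
  "mpdiv A m z1 z2 = (\<chi> i k. (mpeval A m z1 $ i $ k - mpeval A m z2 $ i $ k) / (z1 - z2))"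

definition blockmat :: "complex^'n^'n \<Rightarrow> complex^'n^'n \<Rightarrow> complex^'n^'n \<Rightarrow> complex^'n^'n
    \<Rightarrow> complex^('n + 'n)^('n + 'n)" where
  "blockmat X Y Z W = (\<chi> i j. case (i, j) of
      (Inl a, Inl b) \<Rightarrow> X $ a $ b
    | (Inl a, Inr b) \<Rightarrow> Y $ a $ b
    | (Inr a, Inl b) \<Rightarrow> Z $ a $ b
    | (Inr a, Inr b) \<Rightarrow> W $ a $ b)"

definition Fmat :: "(nat \<Rightarrow> complex^'n^'n) \<Rightarrow> nat \<Rightarrow> complex \<Rightarrow> complex \<Rightarrow> complex
    \<Rightarrow> complex^('n + 'n)^('n + 'n)" where
  "Fmat A m z1 z2 \<gamma> = blockmat (mpeval A m z1) 0
      (\<chi> i k. \<gamma> * (mpdiv A m z1 z2 $ i $ k)) (mpeval A m z2)"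

definition adjoint_mat :: "complex^'k^'k \<Rightarrow> complex^'k^'k" where
  "adjoint_mat M = (\<chi> i j. cnj (M $ j $ i))"

definition charpoly :: "complex^'k^'k \<Rightarrow> complex poly" where
  "charpoly M = det (\<chi> i j. (if i = j then [:0, 1:] else 0) - [:M $ i $ j:])"

definition eig_count_ge :: "complex^'k^'k \<Rightarrow> real \<Rightarrow> nat" where
  "eig_count_ge M t =
     (\<Sum>z\<in>{z. poly (charpoly M) z = 0 \<and> Im z = 0 \<and> t \<le> Re z}. order z (charpoly M))"

text \<open>k-th largest singular value s_k(A) (k = 1..CARD('k)): square root of the
  k-th largest eigenvalue (with multiplicity) of A^* A.\<close>
definition sval :: "nat \<Rightarrow> complex^'k^'k \<Rightarrow> real" where
  "sval k A = sqrt (Sup {t. 0 \<le> t \<and> k \<le> eig_count_ge (adjoint_mat A ** A) t})"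

definition wmat :: "(nat \<Rightarrow> real) \<Rightarrow> nat \<Rightarrow> complex \<Rightarrow> complex \<Rightarrow> complex \<Rightarrow> complex^2^2" where
  "wmat \<omega> m z1 z2 \<gamma> = (let
      a = (\<Sum>j\<le>m. \<omega> j * cmod z1 ^ j);
      d = (\<Sum>j\<le>m. \<omega> j * cmod z2 ^ j);
      c = (\<Sum>j\<le>m. \<omega> j * cmod (z1 ^ j - z2 ^ j) / cmod (z1 - z2))
    in (\<chi> i k. if i = 1 \<and> k = 1 then complex_of_real a
              else if i = 2 \<and> k = 1 then \<gamma> * complex_of_real c
              else if i = 2 \<and> k = 2 then complex_of_real d else 0))"

end

theory Submission
  imports Defs
begin


definition cinner :: "complex^'k \<Rightarrow> complex^'k \<Rightarrow> complex" where
  "cinner x y = (\<Sum>i\<in>UNIV. cnj (x$i) * y$i)"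

lemma cinner_add_right: "cinner x (y + z) = cinner x y + cinner x z"
  by (simp add: cinner_def distrib_left sum.distrib)
lemma cinner_add_left: "cinner (x + y) z = cinner x z + cinner y z"
  by (simp add: cinner_def distrib_right sum.distrib)
lemma cinner_diff_right: "cinner x (y - z) = cinner x y - cinner x z"
  by (simp add: cinner_def right_diff_distrib sum_subtractf)
lemma cinner_diff_left: "cinner (x - y) z = cinner x z - cinner y z"
  by (simp add: cinner_def left_diff_distrib sum_subtractf)
lemma cinner_smult_right: "cinner x (c *s y) = c * cinner x y"
  by (simp add: cinner_def sum_distrib_left algebra_simps)
lemma cinner_smult_left: "cinner (c *s x) y = cnj c * cinner x y"
  by (simp add: cinner_def sum_distrib_left algebra_simps)
lemma cinner_cnj: "cnj (cinner x y) = cinner y x"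
  by (simp add: cinner_def mult.commute)
lemma cinner_zero_right[simp]: "cinner x 0 = 0" by (simp add: cinner_def)
lemma cinner_zero_left[simp]: "cinner 0 x = 0" by (simp add: cinner_def)

lemma cinner_self: "cinner x x = complex_of_real ((norm x)^2)"
proof -
  have "(norm x)^2 = (\<Sum>i\<in>UNIV. (cmod (x$i))^2)"
    by (simp add: norm_vec_def L2_set_def sum_nonneg)
  hence "complex_of_real ((norm x)^2) = (\<Sum>i\<in>UNIV. complex_of_real ((cmod (x$i))^2))"
    by simp
  also have "\<dots> = cinner x x" unfolding cinner_def
  proof (rule sum.cong)
    fix i
    show "complex_of_real ((cmod (x$i))^2) = cnj (x$i) * x$i"
      by (metis complex_norm_square mult.commute)
  qed simp
  finally show ?thesis by simp
qed

lemma cinner_self_eq_0: "cinner x x = 0 \<longleftrightarrow> x = 0"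
  by (simp add: cinner_self)

lemma adjoint_mult: "cinner (A *v x) y = cinner x (adjoint_mat A *v y)"
proof -
  have "cinner (A *v x) y = (\<Sum>i\<in>UNIV. \<Sum>k\<in>UNIV. cnj (A$i$k) * cnj (x$k) * y$i)"
    by (simp add: cinner_def matrix_vector_mult_def sum_distrib_left sum_distrib_right mult_ac)
  also have "\<dots> = (\<Sum>k\<in>UNIV. \<Sum>i\<in>UNIV. cnj (A$i$k) * cnj (x$k) * y$i)"
    by (rule sum.swap)
  also have "\<dots> = cinner x (adjoint_mat A *v y)"
    by (simp add: cinner_def matrix_vector_mult_def adjoint_mat_def sum_distrib_left sum_distrib_right mult_ac)
  finally show ?thesis .
qed

lemma adjoint_adjoint[simp]: "adjoint_mat (adjoint_mat A) = A"
  by (simp add: adjoint_mat_def vec_eq_iff)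

lemma adjoint_mult': "cinner x (A *v y) = cinner (adjoint_mat A *v x) y"
  using adjoint_mult[of "adjoint_mat A" x y] by simp

lemma adjoint_matmul: "adjoint_mat (A ** B) = adjoint_mat B ** adjoint_mat A"
  by (simp add: adjoint_mat_def vec_eq_iff matrix_matrix_mult_def mult.commute)

lemma matvec_scaleR: "A *v (r *\<^sub>R x) = r *\<^sub>R (A *v (x::complex^'k))"
  by (simp add: vec_eq_iff matrix_vector_mult_def scaleR_sum_right)

lemma matvec_linear: "linear (\<lambda>x::complex^'k. (A::complex^'k^'j) *v x)"
  by (rule linearI) (simp_all add: matrix_vector_right_distrib matvec_scaleR)

lemma matvec_bl: "bounded_linear (\<lambda>x::complex^'k. (A::complex^'k^'j) *v x)"
  using matvec_linear linear_conv_bounded_linear by blast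

lemma specnorm_bound: "norm (A *v x) \<le> specnorm A * norm x"
  unfolding specnorm_def using onorm[OF matvec_bl] .

lemma specnorm_nonneg: "0 \<le> specnorm A"
  unfolding specnorm_def using onorm_pos_le[OF matvec_bl] .

lemma specnorm_le: "(\<And>x. norm (A *v x) \<le> b * norm x) \<Longrightarrow> specnorm A \<le> b"
  unfolding specnorm_def by (rule onorm_le)

lemma norm_smult: "norm (c *s (x::complex^'k)) = cmod c * norm x"
proof -
  have "norm (c *s x) ^2 = (cmod c * norm x)^2"
    by (simp add: norm_vec_def L2_set_def sum_nonneg power_mult_distrib norm_mult sum_distrib_left)
  thus ?thesis by (simp add: power2_eq_iff_nonneg)
qed



lemma exists_orth:
  fixes u :: "'k \<Rightarrow> complex^'k"
  assumes "j \<notin> I"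
  shows "\<exists>y. y \<noteq> 0 \<and> (\<forall>i\<in>I. cinner (u i) y = 0)"
proof -
  define R :: "complex^'k^'k" where "R = (\<chi> r c. if r \<in> I then cnj (u r $ c) else 0)"
  have "row j R = 0" using assms by (simp add: R_def row_def vec_eq_iff)
  hence "det R = 0" by (rule det_zero_row)
  hence "\<not> invertible R" by (simp add: invertible_det_nz)
  hence "\<not>(\<exists>B. B ** R = mat 1)" using invertible_left_inverse by blast
  then obtain y where y: "R *v y = 0" "y \<noteq> 0" using matrix_left_invertible_ker by blast
  have "\<forall>i\<in>I. cinner (u i) y = (R *v y)$i"
    by (simp add: R_def cinner_def matrix_vector_mult_def)
  with y show ?thesis by auto
qed

lemma herm_real:
  assumes "adjoint_mat H = H"
  shows "cinner x (H *v x) = complex_of_real (Re (cinner x (H *v x)))"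
proof -
  have "cnj (cinner x (H *v x)) = cinner x (H *v x)"
    by (metis adjoint_mult' assms cinner_cnj)
  thus ?thesis by (metis Reals_cnj_iff complex_is_Real_iff of_real_Re)
qed

lemma matvec_smult: "A *v (c *s x) = c *s (A *v (x::complex^'k))"
  by (simp add: vec_eq_iff matrix_vector_mult_def sum_distrib_left mult_ac)

lemma eig_step:
  fixes H :: "complex^'k^'k" and u :: "'k \<Rightarrow> complex^'k"
  assumes herm: "adjoint_mat H = H"
    and ev: "\<forall>i\<in>I. H *v u i = of_real (l i) *s u i" and j: "j \<notin> I"
  shows "\<exists>x l0. norm x = 1 \<and> (\<forall>i\<in>I. cinner (u i) x = 0) \<and> H *v x = of_real l0 *s x"
proof -
  define S where "S = {x. \<forall>i\<in>I. cinner (u i) x = 0}"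
  define K where "K = S \<inter> sphere 0 1"
  define f where "f = (\<lambda>x. Re (cinner x (H *v x)))"
  have S_smult: "c *s x \<in> S" if "x \<in> S" for c x using that
    by (simp add: S_def cinner_smult_right)
  have S_add: "x + y \<in> S" if "x \<in> S" "y \<in> S" for x y using that
    by (simp add: S_def cinner_add_right)
  have S_diff: "x - y \<in> S" if "x \<in> S" "y \<in> S" for x y using that
    by (simp add: S_def cinner_diff_right)
  have "closed S"
  proof -
    have "S = (\<Inter>i\<in>I. {x. cinner (u i) x = 0})" by (auto simp: S_def)
    moreover have "closed {x. cinner (u i) x = 0}" for i
      unfolding cinner_def by (intro closed_Collect_eq continuous_intros)
    ultimately show ?thesis by auto
  qed
  hence "compact K" unfolding K_def
    by (simp add: compact_eq_bounded_closed closed_Int bounded_Int)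
  obtain y where y: "y \<noteq> 0" "\<forall>i\<in>I. cinner (u i) y = 0" using exists_orth[OF j] by blast
  have "of_real (1 / norm y) *s y \<in> K"
    using y by (simp add: K_def S_def cinner_smult_right norm_smult norm_divide)
  hence "K \<noteq> {}" by blast
  moreover have "continuous_on K f" unfolding f_def cinner_def matrix_vector_mult_def
    by (intro continuous_intros)
  ultimately obtain x0 where x0: "x0 \<in> K" "\<forall>y\<in>K. f y \<le> f x0"
    using continuous_attains_sup[OF \<open>compact K\<close>] by blast
  have x0S: "x0 \<in> S" and nx0: "norm x0 = 1" using x0 by (auto simp: K_def)
  define l0 where "l0 = f x0"
  have hx0: "cinner x0 (H *v x0) = of_real l0"
    using herm_real[OF herm] by (simp add: l0_def f_def)
  have xx0: "cinner x0 x0 = 1" using nx0 by (simp add: cinner_self)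
  have HS: "H *v x0 \<in> S"
  proof -
    have "cinner (u i) (H *v x0) = 0" if "i \<in> I" for i
    proof -
      have "cinner (u i) (H *v x0) = cinner (H *v u i) x0"
        using adjoint_mult'[of "u i" H x0] herm by simp
      also have "\<dots> = 0" using ev that x0S by (simp add: cinner_smult_left S_def)
      finally show ?thesis .
    qed
    thus ?thesis by (simp add: S_def)
  qed
  define z where "z = H *v x0 - of_real l0 *s x0"
  have zS: "z \<in> S" unfolding z_def by (intro S_diff S_smult HS x0S)
  have x0z: "cinner x0 z = 0"
    by (simp add: z_def cinner_diff_right cinner_smult_right hx0 xx0)
  have zx0: "cinner z x0 = 0" using x0z cinner_cnj[of x0 z] by simp
  have Hx0: "H *v x0 = z + of_real l0 *s x0" by (simp add: z_def)
  have zHx0: "cinner z (H *v x0) = cinner z z"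
    by (simp add: Hx0 cinner_add_right cinner_smult_right zx0)
  have x0Hz: "cinner x0 (H *v z) = cinner z z"
  proof -
    have "cinner x0 (H *v z) = cinner (H *v x0) z"
      using adjoint_mult'[of x0 H z] herm by simp
    also have "\<dots> = cinner z z" by (simp add: Hx0 cinner_add_left cinner_smult_left x0z)
    finally show ?thesis .
  qed
  have "z = 0"
  proof (rule ccontr)
    assume "z \<noteq> 0"
    define N where "N = (norm z)^2"
    have N: "N > 0" using \<open>z \<noteq> 0\<close> by (simp add: N_def)
    have zz: "cinner z z = of_real N" by (simp add: N_def cinner_self)
    define C where "C = Re (cinner z (H *v z))"
    have key: "2 * e * N \<le> e^2 * (l0 * N - C)" if e: "e > 0" for e
    proof -
      define w where "w = x0 + of_real e *s z"
      have wS: "w \<in> S" unfolding w_def by (intro S_add S_smult x0S zS)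
      have ww: "cinner w w = of_real (1 + e^2 * N)"
        by (simp add: w_def cinner_add_left cinner_add_right cinner_smult_left cinner_smult_right
            xx0 x0z zx0 zz power2_eq_square)
      have nw: "(norm w)^2 = 1 + e^2 * N"
        using ww by (simp only: cinner_self of_real_eq_iff)
      have nw0: "norm w > 0" using nw N e
        by (metis add_pos_nonneg mult_nonneg_nonneg norm_ge_zero zero_less_one
            less_le zero_le_power2 power_zero_numeral zero_less_power2)
      have wHw: "Re (cinner w (H *v w)) = l0 + 2 * e * N + e^2 * C"
        by (simp add: w_def matrix_vector_right_distrib matvec_smult cinner_add_left cinner_add_right
            cinner_smult_left cinner_smult_right hx0 x0Hz zHx0 zz C_def power2_eq_square algebra_simps)
      define w' where "w' = of_real (1 / norm w) *s w"
      have "w' \<in> K" using nw0 wS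
        by (simp add: K_def w'_def S_smult norm_smult norm_divide)
      hence "f w' \<le> l0" using x0 by (simp add: l0_def)
      moreover have "f w' = Re (cinner w (H *v w)) / (norm w)^2"
        by (simp add: f_def w'_def matvec_smult cinner_smult_left cinner_smult_right power2_eq_square)
      ultimately have "Re (cinner w (H *v w)) \<le> l0 * (norm w)^2"
        using nw0 by (simp add: divide_le_eq)
      thus ?thesis unfolding wHw nw by (simp add: algebra_simps power2_eq_square)
    qed
    define e where "e = N / (\<bar>l0 * N - C\<bar> + 1)"
    have e0: "e > 0" using N by (simp add: e_def)
    have "e * (l0 * N - C) < N"
    proof -
      have "e * (l0 * N - C) \<le> e * \<bar>l0 * N - C\<bar>" using e0 by (simp add: mult_left_mono)
      also have "\<dots> < e * (\<bar>l0 * N - C\<bar> + 1)" using e0 by simp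
      also have "\<dots> = N" by (simp add: e_def)
      finally show ?thesis .
    qed
    moreover have "2 * N \<le> e * (l0 * N - C)"
      using key[OF e0] e0 by (simp add: power2_eq_square mult.assoc)
    ultimately show False using N by simp
  qed
  hence "H *v x0 = of_real l0 *s x0" by (simp add: z_def)
  thus ?thesis using nx0 x0S by (auto simp: S_def)
qed

lemma spectral_aux:
  fixes H :: "complex^'k^'k" and I :: "'k set"
  assumes herm: "adjoint_mat H = H" and "finite I"
  shows "\<exists>u l. (\<forall>i\<in>I. \<forall>j\<in>I. cinner (u i) (u j) = (if i = j then 1 else 0))
      \<and> (\<forall>i\<in>I. H *v u i = of_real (l i) *s u i)"
  using \<open>finite I\<close>
proof (induction I rule: finite_induct)
  case empty show ?case by simp
next
  case (insert j I)
  then obtain u l where on: "\<forall>i\<in>I. \<forall>k\<in>I. cinner (u i) (u k) = (if i = k then 1 else 0)"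
    and ev: "\<forall>i\<in>I. H *v u i = of_real (l i) *s u i" by blast
  obtain x l0 where x: "norm x = 1" "\<forall>i\<in>I. cinner (u i) x = 0" "H *v x = of_real l0 *s x"
    using eig_step[OF herm ev insert(2)] by blast
  have xx: "cinner x x = 1" using x(1) by (simp add: cinner_self)
  have xu: "\<forall>i\<in>I. cinner x (u i) = 0" using x(2) cinner_cnj by (metis complex_cnj_zero)
  let ?u = "u(j := x)" and ?l = "l(j := l0)"
  have "\<forall>i\<in>insert j I. \<forall>k\<in>insert j I. cinner (?u i) (?u k) = (if i = k then 1 else 0)"
    using on x(2) xu xx insert(2) by auto
  moreover have "\<forall>i\<in>insert j I. H *v ?u i = of_real (?l i) *s ?u i" using ev x(3) insert(2) by auto
  ultimately show ?case by blast
qed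

lemma spectral:
  fixes H :: "complex^'k^'k" assumes "adjoint_mat H = H"
  obtains u :: "'k \<Rightarrow> complex^'k" and l where "\<And>i j. cinner (u i) (u j) = (if i = j then 1 else 0)"
    "\<And>i. H *v u i = of_real (l i) *s u i"
proof -
  from spectral_aux[OF assms finite_class.finite_UNIV] obtain u :: "'k \<Rightarrow> complex^'k" and l where
    "\<forall>i\<in>UNIV. \<forall>j\<in>UNIV. cinner (u i) (u j) = (if i = j then 1 else 0)"
    "\<forall>i\<in>UNIV. H *v u i = of_real (l i) *s u i" by auto
  thus ?thesis by (intro that) auto
qed

definition umat :: "('k \<Rightarrow> complex^'k) \<Rightarrow> complex^'k^'k" where
  "umat u = (\<chi> r c. u c $ r)"

definition dmat :: "('k \<Rightarrow> real) \<Rightarrow> complex^'k^'k" where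
  "dmat l = (\<chi> i j. if i = j then of_real (l i) else 0)"

lemma umat_adj_left:
  assumes "\<And>i j. cinner (u i) (u j) = (if i = j then 1 else 0)"
  shows "adjoint_mat (umat u) ** umat u = mat 1"
  using assms by (simp add: vec_eq_iff matrix_matrix_mult_def adjoint_mat_def umat_def mat_def cinner_def)

lemma umat_adj_right:
  assumes "\<And>i j. cinner (u i) (u j) = (if i = j then 1 else 0)"
  shows "umat u ** adjoint_mat (umat u) = mat 1"
  using umat_adj_left[OF assms] matrix_left_right_inverse by blast

lemma umat_adj_vec: "(adjoint_mat (umat u) *v x) $ i = cinner (u i) x"
  by (simp add: matrix_vector_mult_def adjoint_mat_def umat_def cinner_def)

lemma umat_eig:
  assumes "\<And>i. H *v u i = of_real (l i) *s u i"
  shows "H ** umat u = umat u ** dmat l"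
proof -
  have "(H ** umat u) $ r $ c = (umat u ** dmat l) $ r $ c" for r c
  proof -
    have "(H ** umat u) $ r $ c = (H *v u c) $ r"
      by (simp add: matrix_matrix_mult_def matrix_vector_mult_def umat_def)
    also have "\<dots> = of_real (l c) * u c $ r" using assms by simp
    also have "\<dots> = (umat u ** dmat l) $ r $ c"
      by (simp add: matrix_matrix_mult_def umat_def dmat_def if_distrib cong: if_cong)
    finally show ?thesis .
  qed
  thus ?thesis by (simp add: vec_eq_iff)
qed

lemma unitary_cinner:
  assumes "adjoint_mat U ** U = mat 1"
  shows "cinner (U *v y) (U *v z) = cinner y z"
  by (simp only: adjoint_mult matrix_vector_mul_assoc assms matrix_vector_mul_lid)

lemma rayleigh:
  fixes u :: "'k \<Rightarrow> complex^'k" and H :: "complex^'k^'k"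
  assumes on: "\<And>i j. cinner (u i) (u j) = (if i = j then 1 else 0)"
    and ev: "\<And>i. H *v u i = of_real (l i) *s u i"
    and orth: "\<And>i. l i < t \<Longrightarrow> cinner (u i) x = 0"
  shows "t * (norm x)^2 \<le> Re (cinner x (H *v x))"
proof -
  let ?U = "umat u"
  define y where "y = adjoint_mat ?U *v x"
  have xy: "x = ?U *v y"
    by (simp add: y_def matrix_vector_mul_assoc umat_adj_right[OF on])
  have yi: "y $ i = cinner (u i) x" for i by (simp add: y_def umat_adj_vec)
  have "complex_of_real ((norm x)^2) = cinner x x" by (simp add: cinner_self)
  also have "\<dots> = cinner y y"
    by (subst (1 2) xy) (rule unitary_cinner[OF umat_adj_left[OF on]])
  also have "\<dots> = (\<Sum>i\<in>UNIV. complex_of_real ((cmod (y$i))^2))"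
    unfolding cinner_def
  proof (rule sum.cong)
    fix i
    show "cnj (y$i) * y$i = complex_of_real ((cmod (y$i))^2)"
      by (metis complex_norm_square mult.commute)
  qed simp
  finally have nx: "(norm x)^2 = (\<Sum>i\<in>UNIV. (cmod (y$i))^2)"
    by (metis of_real_eq_iff of_real_sum)
  have Hx: "H *v x = ?U *v (dmat l *v y)"
    by (subst xy) (simp add: matrix_vector_mul_assoc umat_eig[OF ev])
  have "cinner x (H *v x) = cinner y (dmat l *v y)"
    unfolding Hx by (subst xy) (rule unitary_cinner[OF umat_adj_left[OF on]])
  also have "\<dots> = (\<Sum>i\<in>UNIV. complex_of_real (l i * (cmod (y$i))^2))"
    unfolding cinner_def
  proof (rule sum.cong)
    fix i
    have "(dmat l *v y) $ i = (\<Sum>j\<in>UNIV. (if i = j then of_real (l i) else 0) * y $ j)"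
      by (simp add: matrix_vector_mult_def dmat_def)
    also have "\<dots> = (\<Sum>j\<in>UNIV. if i = j then of_real (l i) * y $ j else 0)"
      by (rule sum.cong) auto
    finally have "(dmat l *v y) $ i = of_real (l i) * y $ i" by simp
    moreover have n: "complex_of_real ((cmod (y$i))^2) = cnj (y$i) * y$i"
      by (metis complex_norm_square mult.commute)
    ultimately show "cnj (y $ i) * (dmat l *v y) $ i = complex_of_real (l i * (cmod (y$i))^2)"
      unfolding of_real_mult n by (simp only: mult_ac)
  qed simp
  finally have xHx: "Re (cinner x (H *v x)) = (\<Sum>i\<in>UNIV. l i * (cmod (y$i))^2)"
    by (simp add: Re_sum)
  have "t * (norm x)^2 = (\<Sum>i\<in>UNIV. t * (cmod (y$i))^2)" by (simp add: nx sum_distrib_left)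
  also have "\<dots> \<le> (\<Sum>i\<in>UNIV. l i * (cmod (y$i))^2)"
  proof (rule sum_mono)
    fix i
    show "t * (cmod (y$i))^2 \<le> l i * (cmod (y$i))^2"
    proof (cases "l i < t")
      case True thus ?thesis using orth[OF True] by (simp add: yi)
    next
      case False thus ?thesis by (simp add: mult_right_mono)
    qed
  qed
  finally show ?thesis using xHx by simp
qed



lemma poly_det: "poly (det P) z = det (\<chi> i j. poly (P$i$j) z)"
  by (simp add: det_def poly_sum poly_prod)

lemma charpoly_eval: "poly (charpoly M) z = det (mat z - M)"
  unfolding charpoly_def poly_det by (rule arg_cong[where f=det]) (simp add: vec_eq_iff mat_def)

lemma mm_sub_r: "(A - B) ** C = A ** C - B ** (C::complex^'k^'k)"
  by (simp add: matrix_matrix_mult_def vec_eq_iff left_diff_distrib sum_subtractf)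
lemma mm_sub_l: "C ** (A - B) = C ** A - C ** (B::complex^'k^'k)"
  by (simp add: matrix_matrix_mult_def vec_eq_iff right_diff_distrib sum_subtractf)

lemma mat_comm: "mat z ** U = U ** (mat z :: complex^'k^'k)"
proof -
  have "(mat z ** U) $ i $ j = z * U $ i $ j" for i j
  proof -
    have "(mat z ** U) $ i $ j = (\<Sum>k\<in>UNIV. (if i = k then z else 0) * U $ k $ j)"
      unfolding matrix_matrix_mult_def mat_def by simp
    also have "\<dots> = (\<Sum>k\<in>UNIV. if i = k then z * U $ k $ j else 0)"
      by (rule sum.cong) auto
    finally have "(mat z ** U) $ i $ j = (\<Sum>k\<in>UNIV. if i = k then z * U $ k $ j else 0)" .
    thus ?thesis by simp
  qed
  moreover have "(U ** mat z) $ i $ j = z * U $ i $ j" for i j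
  proof -
    have "(U ** mat z) $ i $ j = (\<Sum>k\<in>UNIV. U $ i $ k * (if k = j then z else 0))"
      unfolding matrix_matrix_mult_def mat_def by simp
    also have "\<dots> = (\<Sum>k\<in>UNIV. if k = j then z * U $ i $ k else 0)"
      by (rule sum.cong) auto
    finally have "(U ** mat z) $ i $ j = (\<Sum>k\<in>UNIV. if k = j then z * U $ i $ k else 0)" .
    thus ?thesis by simp
  qed
  ultimately show ?thesis by (simp add: vec_eq_iff)
qed

lemma charpoly_herm:
  fixes u :: "'k \<Rightarrow> complex^'k" and H :: "complex^'k^'k"
  assumes on: "\<And>i j. cinner (u i) (u j) = (if i = j then 1 else 0)"
    and ev: "\<And>i. H *v u i = of_real (l i) *s u i"
  shows "charpoly H = (\<Prod>i\<in>UNIV. [:- complex_of_real (l i), 1:])"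
proof -
  let ?U = "umat u"
  have d1: "det (adjoint_mat ?U) * det ?U = 1"
    using umat_adj_left[OF on] det_mul[of "adjoint_mat ?U" ?U] by simp
  hence dU: "det ?U \<noteq> 0" by auto
  have "poly (charpoly H) z = poly (\<Prod>i\<in>UNIV. [:- complex_of_real (l i), 1:]) z" for z
  proof -
    have "(mat z - H) ** ?U = ?U ** (mat z - dmat l)"
      by (simp add: mm_sub_r mm_sub_l mat_comm umat_eig[OF ev])
    hence "det (mat z - H) * det ?U = det ?U * det (mat z - dmat l)"
      by (metis det_mul)
    hence "det (mat z - H) = det (mat z - dmat l)" using dU by simp
    also have "\<dots> = (\<Prod>i\<in>UNIV. (mat z - dmat l) $ i $ i)"
      by (rule det_diagonal) (simp add: mat_def dmat_def)
    also have "\<dots> = (\<Prod>i\<in>UNIV. z - complex_of_real (l i))"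
      by (simp add: mat_def dmat_def)
    finally show ?thesis by (simp add: charpoly_eval poly_prod)
  qed
  thus ?thesis using poly_eq_poly_eq_iff by blast
qed

lemma order_lin: "order z [:- a, 1:] = (if a = z then 1 else (0::nat))"
proof (cases "a = z")
  case True thus ?thesis using order_power_n_n[of z 1] by simp
next
  case False thus ?thesis by (simp add: order_0I)
qed

lemma order_prod_lin:
  assumes "finite I"
  shows "order z (\<Prod>i\<in>I. [:- c i, 1:]) = card {i\<in>I. c i = z}"
  using assms
proof (induction I rule: finite_induct)
  case empty thus ?case by simp
next
  case (insert j I)
  have nz: "(\<Prod>i\<in>I. [:- c i, 1:]) \<noteq> 0" using insert(1) by (simp add: prod_zero_iff)
  have "order z (\<Prod>i\<in>insert j I. [:- c i, 1:]) = order z [:- c j, 1:] + order z (\<Prod>i\<in>I. [:- c i, 1:])"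
  proof -
    have "(\<Prod>i\<in>insert j I. [:- c i, 1:]) = [:- c j, 1:] * (\<Prod>i\<in>I. [:- c i, 1:])"
      using insert(1,2) by simp
    moreover have "[:- c j, 1:] * (\<Prod>i\<in>I. [:- c i, 1:]) \<noteq> 0"
      by (rule no_zero_divisors) (simp, rule nz)
    ultimately show ?thesis using order_mult by metis
  qed
  also have "\<dots> = (if c j = z then 1 else 0) + card {i\<in>I. c i = z}" by (simp add: order_lin insert.IH)
  also have "\<dots> = card {i\<in>insert j I. c i = z}"
  proof -
    have "{i\<in>insert j I. c i = z} = (if c j = z then insert j {i\<in>I. c i = z} else {i\<in>I. c i = z})"
      by auto
    thus ?thesis using insert(1,2) by simp
  qed
  finally show ?case .
qed

lemma count_herm:
  fixes u :: "'k \<Rightarrow> complex^'k" and H :: "complex^'k^'k"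
  assumes on: "\<And>i j. cinner (u i) (u j) = (if i = j then 1 else 0)"
    and ev: "\<And>i. H *v u i = of_real (l i) *s u i"
  shows "eig_count_ge H t = card {i. t \<le> l i}"
proof -
  let ?p = "\<Prod>i\<in>UNIV. [:- complex_of_real (l i), 1:]"
  let ?g = "\<lambda>i. complex_of_real (l i)"
  let ?A = "{i. t \<le> l i}"
  have cp: "charpoly H = ?p" by (rule charpoly_herm[OF on ev])
  have R: "{z. poly ?p z = 0 \<and> Im z = 0 \<and> t \<le> Re z} = ?g ` ?A"
    by (auto simp: poly_prod prod_zero_iff)
  have "eig_count_ge H t = (\<Sum>z\<in>?g ` ?A. card {i. ?g i = z})"
    unfolding eig_count_ge_def cp R by (simp add: order_prod_lin)
  also have "\<dots> = (\<Sum>z\<in>?g ` ?A. card {i\<in>?A. ?g i = z})"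
    by (rule sum.cong) (auto intro!: arg_cong[where f=card])
  also have "\<dots> = card ?A"
    using sum.image_gen[of ?A "\<lambda>_. 1::nat" ?g] by simp
  finally show ?thesis .
qed



lemma pick_x:
  fixes a b :: "complex^'k" and u :: "'j \<Rightarrow> complex^'k"
  assumes ab: "\<And>\<alpha> \<beta>. \<alpha> *s a + \<beta> *s b = 0 \<Longrightarrow> \<alpha> = 0 \<and> \<beta> = 0"
    and B: "\<forall>i\<in>B. \<forall>j\<in>B. i = j"
  shows "\<exists>x. x \<noteq> 0 \<and> (\<exists>\<alpha> \<beta>. x = \<alpha> *s a + \<beta> *s b) \<and> (\<forall>i\<in>B. cinner (u i) x = 0)"
proof -
  have a0: "a \<noteq> 0" using ab[of 1 0] by auto
  have aspan: "a = 1 *s a + 0 *s b" by simp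
  show ?thesis
  proof (cases "B = {}")
    case True thus ?thesis using a0 aspan by blast
  next
    case False
    then obtain i0 where i0: "i0 \<in> B" by blast
    hence Bi: "B = {i0}" using B by auto
    define \<alpha> where "\<alpha> = cinner (u i0) b"
    define \<beta> where "\<beta> = - cinner (u i0) a"
    show ?thesis
    proof (cases "\<alpha> = 0 \<and> \<beta> = 0")
      case True
      hence "cinner (u i0) a = 0" by (simp add: \<beta>_def)
      thus ?thesis using a0 aspan Bi by blast
    next
      case False
      let ?x = "\<alpha> *s a + \<beta> *s b"
      have "?x \<noteq> 0" using ab False by blast
      moreover have "cinner (u i0) ?x = 0"
        by (simp add: cinner_add_right cinner_diff_right cinner_smult_right \<alpha>_def \<beta>_def mult.commute)
      ultimately show ?thesis using Bi by blast
    qed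
  qed
qed

lemma sval_bound:
  fixes M :: "complex^'k^'k" and a b :: "complex^'k"
  assumes ab: "\<And>\<alpha> \<beta>. \<alpha> *s a + \<beta> *s b = 0 \<Longrightarrow> \<alpha> = 0 \<and> \<beta> = 0"
    and ker: "\<And>\<alpha> \<beta>. norm (M *v (\<alpha> *s a + \<beta> *s b)) \<le> s * norm (\<alpha> *s a + \<beta> *s b)"
    and k1: "CARD('k) \<le> k + 1" and k2: "k \<le> CARD('k)" and s0: "0 \<le> s"
  shows "sval k M \<le> s"
proof -
  define H where "H = adjoint_mat M ** M"
  have herm: "adjoint_mat H = H" by (simp add: H_def adjoint_matmul)
  obtain u :: "'k \<Rightarrow> complex^'k" and l where
    on: "\<And>i j. cinner (u i) (u j) = (if i = j then 1 else 0)" and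
    ev: "\<And>i. H *v u i = of_real (l i) *s u i"
    using spectral[OF herm] by blast
  have xHx: "cinner x (H *v x) = of_real ((norm (M *v x))^2)" for x
    by (simp add: H_def matrix_vector_mul_assoc[symmetric] adjoint_mult' cinner_self)
  have l0: "0 \<le> l i" for i
  proof -
    have "of_real (l i) = cinner (u i) (H *v u i)" by (simp add: ev cinner_smult_right on)
    also have "\<dots> = of_real ((norm (M *v u i))^2)" by (rule xHx)
    finally show ?thesis by (metis of_real_eq_iff zero_le_power2)
  qed
  define T where "T = {t. 0 \<le> t \<and> k \<le> eig_count_ge H t}"
  have "0 \<in> T" using k2 l0 by (simp add: T_def count_herm[OF on ev])
  hence Tne: "T \<noteq> {}" by blast
  have Tb: "t \<le> s^2" if "t \<in> T" for t
  proof -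
    from that have t0: "0 \<le> t" and kc: "k \<le> card {i. t \<le> l i}"
      by (auto simp: T_def count_herm[OF on ev])
    define B where "B = {i. l i < t}"
    have "card B + card {i. t \<le> l i} = CARD('k)"
    proof -
      have "B \<union> {i. t \<le> l i} = UNIV" "B \<inter> {i. t \<le> l i} = {}" by (auto simp: B_def)
      thus ?thesis using card_Un_disjoint[of B "{i. t \<le> l i}"] by simp
    qed
    hence "card B \<le> Suc 0" using kc k1 by linarith
    hence "\<forall>i\<in>B. \<forall>j\<in>B. i = j" using card_le_Suc0_iff_eq[of B] by simp
    from pick_x[OF ab this, where u=u] obtain x where
      x: "x \<noteq> 0" "\<exists>\<alpha> \<beta>. x = \<alpha> *s a + \<beta> *s b" "\<forall>i\<in>B. cinner (u i) x = 0"
      by blast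
    have orth: "\<And>i. l i < t \<Longrightarrow> cinner (u i) x = 0" using x(3) unfolding B_def by blast
    have "t * (norm x)^2 \<le> Re (cinner x (H *v x))"
      by (rule rayleigh[OF on ev orth])
    also have "\<dots> = (norm (M *v x))^2" by (simp only: xHx Re_complex_of_real)
    also have "\<dots> \<le> (s * norm x)^2"
    proof -
      obtain \<alpha> \<beta> where xe: "x = \<alpha> *s a + \<beta> *s b" using x(2) by blast
      have "norm (M *v x) \<le> s * norm x" unfolding xe by (rule ker)
      thus ?thesis by (rule power_mono) simp
    qed
    finally have "t * (norm x)^2 \<le> s^2 * (norm x)^2" by (simp only: power_mult_distrib)
    moreover have "0 < (norm x)^2" using x(1) by simp
    ultimately show ?thesis by (rule mult_right_le_imp_le)
  qed
  have "Sup T \<le> s^2" by (rule cSup_least[OF Tne]) (rule Tb)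
  hence "sqrt (Sup T) \<le> sqrt (s^2)" by (rule real_sqrt_le_mono)
  thus ?thesis using s0 by (simp add: sval_def T_def H_def)
qed



definition join :: "complex^'n \<Rightarrow> complex^'n \<Rightarrow> complex^('n + 'n)" where
  "join p q = (\<chi> i. case i of Inl a \<Rightarrow> p $ a | Inr b \<Rightarrow> q $ b)"

definition pl :: "complex^('n + 'n) \<Rightarrow> complex^'n" where "pl x = (\<chi> a. x $ Inl a)"
definition pr :: "complex^('n + 'n) \<Rightarrow> complex^'n" where "pr x = (\<chi> a. x $ Inr a)"

lemma join_split: "x = join (pl x) (pr x)"
  by (simp add: vec_eq_iff join_def pl_def pr_def split: sum.split)

lemma join_Inl[simp]: "join p q $ Inl a = p $ a" by (simp add: join_def)
lemma join_Inr[simp]: "join p q $ Inr a = q $ a" by (simp add: join_def)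

lemma join_eq0: "join p q = 0 \<longleftrightarrow> p = 0 \<and> q = 0"
  by (auto simp: vec_eq_iff join_def split: sum.split)

lemma join_add: "join p q + join p' q' = join (p + p') (q + q')"
  by (simp add: vec_eq_iff join_def split: sum.split)
lemma join_smult: "c *s join p q = join (c *s p) (c *s q)"
  by (simp add: vec_eq_iff join_def split: sum.split)

lemma sum_plus_univ: fixes f :: "('a::finite + 'b::finite) \<Rightarrow> 'c::comm_monoid_add"
  shows "(\<Sum>i\<in>UNIV. f i) = (\<Sum>a\<in>UNIV. f (Inl a)) + (\<Sum>b\<in>UNIV. f (Inr b))"
proof -
  have "(\<Sum>i\<in>UNIV. f i) = (\<Sum>i\<in>(UNIV <+> UNIV). f i)" by (simp add: UNIV_Plus_UNIV)
  also have "\<dots> = sum (f o Inl) UNIV + sum (f o Inr) UNIV" by (rule sum.Plus) simp_all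
  finally show ?thesis by (simp add: o_def)
qed

lemma norm_sq: "(norm (x::complex^'k))^2 = (\<Sum>i\<in>UNIV. (cmod (x$i))^2)"
  by (simp add: norm_vec_def L2_set_def sum_nonneg)

lemma norm_join: "(norm (join p q))^2 = (norm p)^2 + (norm q)^2"
  by (simp add: norm_sq sum_plus_univ[of "\<lambda>i. (cmod (join p q $ i))^2"])

lemma block_mv: "blockmat X Y Z W *v join p q = join (X *v p + Y *v q) (Z *v p + W *v q)"
proof -
  have "(blockmat X Y Z W *v join p q) $ i = join (X *v p + Y *v q) (Z *v p + W *v q) $ i" for i
    by (cases i) (simp_all add: matrix_vector_mult_def blockmat_def sum_plus_univ)
  thus ?thesis by (simp add: vec_eq_iff)
qed

lemma mpeval_mv: "mpeval D m z *v x = (\<Sum>j\<le>m. z^j *s (D j *v x))"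
  by (simp add: vec_eq_iff matrix_vector_mult_def mpeval_def sum_component sum_distrib_left
      sum_distrib_right mult_ac sum.swap[of _ "{..m}"])

lemma mpdiv_mv: "mpdiv D m z1 z2 *v x = (\<Sum>j\<le>m. ((z1^j - z2^j) / (z1 - z2)) *s (D j *v x))"
  by (simp add: vec_eq_iff matrix_vector_mult_def mpdiv_def mpeval_def sum_component sum_distrib_left
      sum_distrib_right mult_ac sum.swap[of _ "{..m}"] diff_divide_distrib sum_divide_distrib
      left_diff_distrib right_diff_distrib sum_subtractf)

lemma Fmat_mv: "Fmat D m z1 z2 \<gamma> *v join p q
   = join (mpeval D m z1 *v p) (\<gamma> *s (mpdiv D m z1 z2 *v p) + mpeval D m z2 *v q)"
proof -
  have "(\<chi> i k. \<gamma> * (mpdiv D m z1 z2 $ i $ k)) *v p = \<gamma> *s (mpdiv D m z1 z2 *v p)"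
    by (simp add: vec_eq_iff matrix_vector_mult_def sum_distrib_left mult_ac)
  thus ?thesis by (simp add: Fmat_def block_mv)
qed

lemma mpeval_add: "mpeval (\<lambda>j. A j + D j) m z = mpeval A m z + mpeval D m z"
  by (simp add: vec_eq_iff mpeval_def distrib_left sum.distrib)
lemma mpdiv_add: "mpdiv (\<lambda>j. A j + D j) m z1 z2 = mpdiv A m z1 z2 + mpdiv D m z1 z2"
  by (simp add: vec_eq_iff mpdiv_def mpeval_add) (simp add: diff_divide_distrib add_divide_distrib algebra_simps)

lemma Fmat_add_mv: "Fmat (\<lambda>j. A j + D j) m z1 z2 \<gamma> *v x = Fmat A m z1 z2 \<gamma> *v x + Fmat D m z1 z2 \<gamma> *v x"
  by (subst (1 2 3) join_split[of x])
     (simp add: Fmat_mv join_add mpeval_add mpdiv_add matrix_vector_mult_add_rdistrib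
      vector_add_ldistrib algebra_simps)

lemma sum_bound:
  assumes "\<forall>j\<le>m. specnorm (D j) \<le> \<epsilon> * \<omega> j"
  shows "norm (\<Sum>j\<le>m. c j *s (D j *v x)) \<le> \<epsilon> * (\<Sum>j\<le>m. \<omega> j * cmod (c j)) * norm x"
proof -
  have "norm (\<Sum>j\<le>m. c j *s (D j *v x)) \<le> (\<Sum>j\<le>m. norm (c j *s (D j *v x)))"
    by (rule norm_sum)
  also have "\<dots> \<le> (\<Sum>j\<le>m. \<epsilon> * \<omega> j * cmod (c j) * norm x)"
  proof (rule sum_mono)
    fix j assume "j \<in> {..m}"
    hence "specnorm (D j) \<le> \<epsilon> * \<omega> j" using assms by simp
    hence "norm (D j *v x) \<le> \<epsilon> * \<omega> j * norm x"
      using specnorm_bound[of "D j" x] by (meson mult_right_mono norm_ge_zero order_trans)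
    thus "norm (c j *s (D j *v x)) \<le> \<epsilon> * \<omega> j * cmod (c j) * norm x"
      by (simp add: norm_smult) (metis mult.commute mult.left_commute mult_left_mono norm_ge_zero)
  qed
  also have "\<dots> = \<epsilon> * (\<Sum>j\<le>m. \<omega> j * cmod (c j)) * norm x"
    by (simp add: sum_distrib_left sum_distrib_right mult_ac)
  finally show ?thesis .
qed

lemma ker_vec:
  fixes M :: "complex^'n^'n"
  assumes "det M = 0" shows "\<exists>u. u \<noteq> 0 \<and> M *v u = 0"
proof -
  have "\<not> invertible M" using assms by (simp add: invertible_det_nz)
  hence "\<not>(\<exists>B. B ** M = mat 1)" using invertible_left_inverse by blast
  thus ?thesis using matrix_left_invertible_ker by blast
qed



lemma mpdiv_mv2: "mpdiv R m z1 z2 *v x = (1 / (z1 - z2)) *s (mpeval R m z1 *v x - mpeval R m z2 *v x)"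
  by (simp add: vec_eq_iff matrix_vector_mult_def mpdiv_def sum_distrib_left sum_subtractf
      diff_divide_distrib left_diff_distrib right_diff_distrib mult_ac)

lemma smult_eq0: "c *s (u::complex^'n) = 0 \<Longrightarrow> u \<noteq> 0 \<Longrightarrow> c = 0"
  by (metis norm_smult norm_eq_zero mult_eq_0_iff)

lemma norm2_sq: "(norm (y::complex^2))^2 = (cmod (y$1))^2 + (cmod (y$2))^2"
  by (simp add: norm_sq sum_2)

lemma sgn_mult_cmod: "sgn (\<gamma>::complex) * complex_of_real (cmod \<gamma>) = \<gamma>"
  by (cases "\<gamma> = 0") (simp_all add: sgn_div_norm scaleR_conv_of_real)

lemma wmat_mv:
  "wmat \<omega> m z1 z2 \<gamma> *v y = (\<chi> i. if i = 1 then of_real (\<Sum>j\<le>m. \<omega> j * cmod z1 ^ j) * y$1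
      else \<gamma> * of_real (\<Sum>j\<le>m. \<omega> j * cmod (z1 ^ j - z2 ^ j) / cmod (z1 - z2)) * y$1
         + of_real (\<Sum>j\<le>m. \<omega> j * cmod z2 ^ j) * y$2)"
  by (simp add: vec_eq_iff forall_2 matrix_vector_mult_def sum_2 wmat_def Let_def)

lemma wsum_ge0: "\<forall>j\<le>m. \<omega> j \<ge> (0::real) \<Longrightarrow> r \<ge> 0 \<Longrightarrow> \<omega> 0 \<le> (\<Sum>j\<le>m. \<omega> j * r ^ j)"
  using member_le_sum[of 0 "{..m}" "\<lambda>j. \<omega> j * r ^ j"] by simp

theorem lemma6:
  fixes A D :: "nat \<Rightarrow> complex^'n^'n" and m :: nat
    and \<mu>1 \<mu>2 \<gamma> :: complex and \<epsilon> :: real and \<omega> :: "nat \<Rightarrow> real"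
  assumes "\<mu>1 \<noteq> \<mu>2" and "\<epsilon> > 0"
    and "\<forall>j\<le>m. \<omega> j \<ge> 0" and "\<omega> 0 > 0"
    and "\<forall>j\<le>m. specnorm (D j) \<le> \<epsilon> * \<omega> j"
    and "det (mpeval (\<lambda>j. A j + D j) m \<mu>1) = 0"
    and "det (mpeval (\<lambda>j. A j + D j) m \<mu>2) = 0"
    and "\<gamma> \<noteq> 0"
  shows "\<epsilon> \<ge> specnorm (Fmat D m \<mu>1 \<mu>2 \<gamma>) / specnorm (wmat \<omega> m \<mu>1 \<mu>2 \<gamma>)
       \<and> specnorm (Fmat D m \<mu>1 \<mu>2 \<gamma>) / specnorm (wmat \<omega> m \<mu>1 \<mu>2 \<gamma>)
           \<ge> sval (2 * CARD('n) - 1) (Fmat A m \<mu>1 \<mu>2 \<gamma>) / specnorm (wmat \<omega> m \<mu>1 \<mu>2 \<gamma>)"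
proof -
  note neq = assms(1) and eps = assms(2) and w0 = assms(3) and wpos = assms(4)
    and Db = assms(5) and d1 = assms(6) and d2 = assms(7) and g0 = assms(8)
  define a' where "a' = (\<Sum>j\<le>m. \<omega> j * cmod \<mu>1 ^ j)"
  define c' where "c' = (\<Sum>j\<le>m. \<omega> j * cmod (\<mu>1 ^ j - \<mu>2 ^ j) / cmod (\<mu>1 - \<mu>2))"
  define d' where "d' = (\<Sum>j\<le>m. \<omega> j * cmod \<mu>2 ^ j)"
  define W where "W = wmat \<omega> m \<mu>1 \<mu>2 \<gamma>"
  define S where "S = specnorm W"
  have Wv: "W *v y = (\<chi> i. if i = 1 then of_real a' * y$1 else \<gamma> * of_real c' * y$1 + of_real d' * y$2)" for y
    unfolding W_def a'_def c'_def d'_def by (rule wmat_mv)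
  have a'0: "\<omega> 0 \<le> a'" unfolding a'_def by (rule wsum_ge0[OF w0]) simp
  have c'0: "0 \<le> c'" unfolding c'_def using w0 by (intro sum_nonneg) simp
  have d'0: "0 \<le> d'" unfolding d'_def using w0 by (intro sum_nonneg) simp
  have Spos: "S > 0"
  proof -
    define y0 :: "complex^2" where "y0 = (\<chi> i. if i = 1 then 1 else 0)"
    have ny0: "norm y0 = 1"
    proof -
      have "(norm y0)^2 = 1" by (simp add: norm2_sq y0_def)
      thus ?thesis using norm_ge_zero[of y0] by (auto simp: power2_eq_1_iff)
    qed
    have "(norm (W *v y0))^2 = a'^2 + (cmod (\<gamma> * of_real c'))^2"
      using a'0 wpos by (simp add: norm2_sq Wv y0_def)
    hence "a'^2 \<le> (norm (W *v y0))^2" by simp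
    hence "a' \<le> norm (W *v y0)" by (rule power2_le_imp_le) simp
    also have "\<dots> \<le> S * norm y0" unfolding S_def by (rule specnorm_bound)
    finally show ?thesis using ny0 a'0 wpos by simp
  qed
  have FD: "specnorm (Fmat D m \<mu>1 \<mu>2 \<gamma>) \<le> \<epsilon> * S"
  proof (rule specnorm_le)
    fix x :: "complex^('n + 'n)"
    define p where "p = pl x"
    define q where "q = pr x"
    have xj: "x = join p q" unfolding p_def q_def by (rule join_split)
    define r1 where "r1 = norm p"
    define r2 where "r2 = norm q"
    have n1: "norm (mpeval D m \<mu>1 *v p) \<le> \<epsilon> * a' * r1"
      unfolding mpeval_mv a'_def r1_def using sum_bound[OF Db, of "\<lambda>j. \<mu>1 ^ j" p]
      by (simp add: norm_power)
    have n2: "norm (mpdiv D m \<mu>1 \<mu>2 *v p) \<le> \<epsilon> * c' * r1"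
      unfolding mpdiv_mv c'_def r1_def using sum_bound[OF Db, of "\<lambda>j. (\<mu>1 ^ j - \<mu>2 ^ j) / (\<mu>1 - \<mu>2)" p]
      by (simp add: norm_divide)
    have n3: "norm (mpeval D m \<mu>2 *v q) \<le> \<epsilon> * d' * r2"
      unfolding mpeval_mv d'_def r2_def using sum_bound[OF Db, of "\<lambda>j. \<mu>2 ^ j" q]
      by (simp add: norm_power)
    define B where "B = cmod \<gamma> * c' * r1 + d' * r2"
    have B0: "0 \<le> B" using c'0 d'0 by (simp add: B_def r1_def r2_def)
    have n4: "norm (\<gamma> *s (mpdiv D m \<mu>1 \<mu>2 *v p) + mpeval D m \<mu>2 *v q) \<le> \<epsilon> * B"
    proof -
      have "norm (\<gamma> *s (mpdiv D m \<mu>1 \<mu>2 *v p) + mpeval D m \<mu>2 *v q)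
          \<le> cmod \<gamma> * norm (mpdiv D m \<mu>1 \<mu>2 *v p) + norm (mpeval D m \<mu>2 *v q)"
        using norm_triangle_ineq by (metis norm_smult)
      also have "\<dots> \<le> cmod \<gamma> * (\<epsilon> * c' * r1) + \<epsilon> * d' * r2"
        using n2 n3 by (intro add_mono mult_left_mono) auto
      finally show ?thesis by (simp add: B_def algebra_simps)
    qed
    have "(norm (Fmat D m \<mu>1 \<mu>2 \<gamma> *v x))^2
        = (norm (mpeval D m \<mu>1 *v p))^2 + (norm (\<gamma> *s (mpdiv D m \<mu>1 \<mu>2 *v p) + mpeval D m \<mu>2 *v q))^2"
      unfolding xj Fmat_mv norm_join ..
    also have "\<dots> \<le> (\<epsilon> * a' * r1)^2 + (\<epsilon> * B)^2"
      by (intro add_mono power_mono n1 n4) auto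
    finally have F2: "(norm (Fmat D m \<mu>1 \<mu>2 \<gamma> *v x))^2 \<le> \<epsilon>^2 * ((a' * r1)^2 + B^2)"
      by (simp add: power_mult_distrib algebra_simps)
    define y :: "complex^2" where "y = (\<chi> i. if i = 1 then of_real r1 else sgn \<gamma> * of_real r2)"
    have Wy2: "(W *v y) $ 2 = sgn \<gamma> * of_real B"
    proof -
      have "(W *v y) $ 2 = \<gamma> * of_real c' * of_real r1 + of_real d' * (sgn \<gamma> * of_real r2)"
        by (simp add: Wv y_def)
      also have "\<dots> = sgn \<gamma> * of_real B"
        by (subst (1) sgn_mult_cmod[of \<gamma>, symmetric]) (simp add: B_def algebra_simps)
      finally show ?thesis .
    qed
    have nWy: "(norm (W *v y))^2 = (a' * r1)^2 + B^2"
      using Wy2 B0 a'0 wpos g0 by (simp add: norm2_sq Wv y_def norm_mult r1_def power_mult_distrib norm_sgn)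
    have ny: "(norm y)^2 = (norm x)^2"
      using g0 by (simp add: norm2_sq y_def norm_mult xj norm_join r1_def r2_def norm_sgn)
    have "norm (W *v y) \<le> S * norm y" unfolding S_def by (rule specnorm_bound)
    hence "(norm (W *v y))^2 \<le> (S * norm y)^2" by (rule power_mono) simp
    hence "(a' * r1)^2 + B^2 \<le> S^2 * (norm x)^2" by (simp add: nWy ny power_mult_distrib)
    hence "\<epsilon>^2 * ((a' * r1)^2 + B^2) \<le> \<epsilon>^2 * (S^2 * (norm x)^2)" by (rule mult_left_mono) simp
    with F2 have "(norm (Fmat D m \<mu>1 \<mu>2 \<gamma> *v x))^2 \<le> (\<epsilon> * S * norm x)^2"
      by (simp add: power_mult_distrib)
    thus "norm (Fmat D m \<mu>1 \<mu>2 \<gamma> *v x) \<le> \<epsilon> * S * norm x"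
      by (rule power2_le_imp_le) (use eps Spos in simp)
  qed
  have conj1: "specnorm (Fmat D m \<mu>1 \<mu>2 \<gamma>) / S \<le> \<epsilon>"
    using FD Spos by (simp add: divide_le_eq mult.commute)
  define Q1 where "Q1 = mpeval (\<lambda>j. A j + D j) m \<mu>1"
  define Q2 where "Q2 = mpeval (\<lambda>j. A j + D j) m \<mu>2"
  obtain u where u: "u \<noteq> 0" "Q1 *v u = 0" using ker_vec[OF d1] unfolding Q1_def by blast
  obtain v where v: "v \<noteq> 0" "Q2 *v v = 0" using ker_vec[OF d2] unfolding Q2_def by blast
  define c where "c = \<gamma> / (\<mu>1 - \<mu>2)"
  define a0 where "a0 = join 0 v"
  define b0 where "b0 = join u (c *s u)"
  have comb: "\<alpha> *s a0 + \<beta> *s b0 = join (\<beta> *s u) (\<alpha> *s v + \<beta> *s (c *s u))" for \<alpha> \<beta>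
    by (simp add: a0_def b0_def join_smult join_add)
  have ab: "\<alpha> = 0 \<and> \<beta> = 0" if "\<alpha> *s a0 + \<beta> *s b0 = 0" for \<alpha> \<beta>
  proof -
    have "\<beta> *s u = 0" "\<alpha> *s v + \<beta> *s (c *s u) = 0" using that by (simp_all add: comb join_eq0)
    hence "\<beta> = 0" using smult_eq0 u(1) by blast
    hence "\<alpha> *s v = 0" using \<open>\<alpha> *s v + \<beta> *s (c *s u) = 0\<close> by simp
    hence "\<alpha> = 0" using smult_eq0 v(1) by blast
    with \<open>\<beta> = 0\<close> show ?thesis by simp
  qed
  have ker: "norm (Fmat A m \<mu>1 \<mu>2 \<gamma> *v (\<alpha> *s a0 + \<beta> *s b0))
      \<le> specnorm (Fmat D m \<mu>1 \<mu>2 \<gamma>) * norm (\<alpha> *s a0 + \<beta> *s b0)" for \<alpha> \<beta>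
  proof -
    let ?x = "\<alpha> *s a0 + \<beta> *s b0"
    have dn: "\<mu>1 - \<mu>2 \<noteq> 0" using neq by simp
    have FQ: "Fmat (\<lambda>j. A j + D j) m \<mu>1 \<mu>2 \<gamma> *v ?x = 0"
    proof -
      have "Fmat (\<lambda>j. A j + D j) m \<mu>1 \<mu>2 \<gamma> *v ?x
        = join (Q1 *v (\<beta> *s u))
            (\<gamma> *s ((1 / (\<mu>1 - \<mu>2)) *s (Q1 *v (\<beta> *s u) - Q2 *v (\<beta> *s u))) + Q2 *v (\<alpha> *s v + \<beta> *s (c *s u)))"
        unfolding comb Fmat_mv mpdiv_mv2 Q1_def Q2_def ..
      also have "\<dots> = join 0 (\<gamma> *s ((1 / (\<mu>1 - \<mu>2)) *s (0 - \<beta> *s (Q2 *v u))) + \<beta> *s (c *s (Q2 *v u)))"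
        by (simp add: matvec_smult u(2) v(2) matrix_vector_right_distrib)
      also have "\<dots> = 0"
        using dn by (simp only: join_eq0 simp_thms) (simp add: vec_eq_iff c_def field_simps)
      finally show ?thesis .
    qed
    have "Fmat A m \<mu>1 \<mu>2 \<gamma> *v ?x = - (Fmat D m \<mu>1 \<mu>2 \<gamma> *v ?x)"
      using FQ Fmat_add_mv[of A D m \<mu>1 \<mu>2 \<gamma> ?x] by (simp add: eq_neg_iff_add_eq_0)
    hence "norm (Fmat A m \<mu>1 \<mu>2 \<gamma> *v ?x) = norm (Fmat D m \<mu>1 \<mu>2 \<gamma> *v ?x)" by simp
    also have "\<dots> \<le> specnorm (Fmat D m \<mu>1 \<mu>2 \<gamma>) * norm ?x" by (rule specnorm_bound)
    finally show ?thesis .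
  qed
  have cn: "CARD('n + 'n) = 2 * CARD('n)" by (simp add: card_sum)
  have cn1: "0 < CARD('n)" by simp
  have sv: "sval (2 * CARD('n) - 1) (Fmat A m \<mu>1 \<mu>2 \<gamma>) \<le> specnorm (Fmat D m \<mu>1 \<mu>2 \<gamma>)"
    by (rule sval_bound[where a=a0 and b=b0]) (use ab ker cn cn1 specnorm_nonneg in auto)
  have conj2: "sval (2 * CARD('n) - 1) (Fmat A m \<mu>1 \<mu>2 \<gamma>) / S \<le> specnorm (Fmat D m \<mu>1 \<mu>2 \<gamma>) / S"
    using sv Spos by (simp add: divide_right_mono)
  show ?thesis using conj1 conj2 by (simp add: S_def W_def)
qed


end
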